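(* Let $T$ be a finite rooted unweighted tree with root $r_T$ and height $h_T$, and consider the Hydra game on $T$ played by $\mathrm{HERC}$. Define the potential $\Phi = 4\, h_T\, H(\mathrm{rank}(r_T)) + \sum_{w \in T} \eta(w)\,\mathrm{level}(w)$. Fix any step in which the adversary kills an alive node $u$ (with the game not yet ended before the step) and, as a result, $\mathrm{HERC}$ changes its distribution from $\eta$ to $\eta'$. Let $\Delta\mathrm{HERC} = \sum_{w \neq u} (\eta'(w)-\eta(w))\,\mathrm{dist}(u,w)$ be the cost incurred by $\mathrm{HERC}$ in this step and let $\Delta\Phi$ be the resulting change of $\Phi$. Then $\Delta\Phi \le -\Delta\mathrm{HERC}$.
   Context: Hydra game: it is played on a fixed finite rooted unweighted tree $T$ known in advance. Each node is asleep, alive, or dead. Initially the root $r_T$ is alive and all other nodes are asleep. In each step the adversary picks an alive node $w$, makes it dead, and makes all its children alive. The game ends when all nodes except one are dead. $\mathrm{dist}(u,w)$ is the length of the shortest path between $u$ and $w$ in $T$. $\mathrm{rank}(u)$ is the number of non-dead leaves in the subtree rooted at $u$ (at the current time); $\mathrm{level}(u)$ is the height of the subtree rooted at $u$ (leaves have level $0$, $h_T=\mathrm{level}(r_T)$). $H(n)=\sum_{i=1}^n 1/i$. Algorithm $\mathrm{HERC}$ maintains the probability distribution $\eta$ with $\eta(u)=\mathrm{rank}(u)/\mathrm{rank}(r_T)$ for alive $u$ and $\eta(u)=0$ otherwise. When $u$ is killed, the new distribution $\eta'$ has $\eta'(u)=0$ and: if $u$ is not a leaf, $\eta'(w)=(\mathrm{rank}(w)/\mathrm{rank}(u))\,\eta(u)$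 for each child $w$ of $u$ and $\eta'=\eta$ elsewhere; if $u$ is a leaf, $\eta'(w)=\eta(w)/(1-\eta(u))$ for all $w\neq u$. Moving probability mass $p$ from node $u$ to node $w$ is charged cost $p\cdot\mathrm{dist}(u,w)$. *)

theory Defs
  imports "HOL-Analysis.Analysis"
begin

(* A finite rooted tree: node set V, root r, parent function p.
   Convention: p r = r (the root's "parent" is irrelevant; it is never an edge). *)
definition rooted_tree :: "'a set \<Rightarrow> 'a \<Rightarrow> ('a \<Rightarrow> 'a) \<Rightarrow> bool" where
  "rooted_tree V r p \<longleftrightarrow> finite V \<and> r \<in> V \<and> p r = r \<and>
     (\<forall>v \<in> V. p v \<in> V) \<and> (\<forall>v \<in> V. \<exists>n. (p ^^ n) v = r)"

definition children :: "'a set \<Rightarrow> 'a \<Rightarrow> ('a \<Rightarrow> 'a) \<Rightarrow> 'a \<Rightarrow> 'a set" where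
  "children V r p u = {w \<in> V. w \<noteq> r \<and> p w = u}"

definition subtree :: "'a set \<Rightarrow> ('a \<Rightarrow> 'a) \<Rightarrow> 'a \<Rightarrow> 'a set" where
  "subtree V p u = {w \<in> V. \<exists>n. (p ^^ n) w = u}"

definition is_leaf :: "'a set \<Rightarrow> 'a \<Rightarrow> ('a \<Rightarrow> 'a) \<Rightarrow> 'a \<Rightarrow> bool" where
  "is_leaf V r p w \<longleftrightarrow> w \<in> V \<and> children V r p w = {}"

definition adj :: "'a set \<Rightarrow> 'a \<Rightarrow> ('a \<Rightarrow> 'a) \<Rightarrow> 'a \<Rightarrow> 'a \<Rightarrow> bool" where
  "adj V r p x y \<longleftrightarrow> x \<in> V \<and> y \<in> V \<and> ((x \<noteq> r \<and> p x = y) \<or> (y \<noteq> r \<and> p y = x))"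

definition tdist :: "'a set \<Rightarrow> 'a \<Rightarrow> ('a \<Rightarrow> 'a) \<Rightarrow> 'a \<Rightarrow> 'a \<Rightarrow> nat" where
  "tdist V r p u w = (LEAST n. \<exists>xs. length xs = Suc n \<and> hd xs = u \<and> last xs = w \<and>
       (\<forall>i < n. adj V r p (xs ! i) (xs ! Suc i)))"

definition level :: "'a set \<Rightarrow> 'a \<Rightarrow> ('a \<Rightarrow> 'a) \<Rightarrow> 'a \<Rightarrow> nat" where
  "level V r p u = Max (tdist V r p u ` subtree V p u)"

datatype status = Asleep | Alive | Dead

definition init_state :: "'a \<Rightarrow> 'a \<Rightarrow> status" where
  "init_state r = (\<lambda>v. if v = r then Alive else Asleep)"

definition game_ended :: "'a set \<Rightarrow> ('a \<Rightarrow> status) \<Rightarrow> bool" where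
  "game_ended V st \<longleftrightarrow> card {v \<in> V. st v \<noteq> Dead} = 1"

definition kill :: "'a set \<Rightarrow> 'a \<Rightarrow> ('a \<Rightarrow> 'a) \<Rightarrow> ('a \<Rightarrow> status) \<Rightarrow> 'a \<Rightarrow> ('a \<Rightarrow> status)" where
  "kill V r p st u = (\<lambda>v. if v = u then Dead
                          else if v \<in> children V r p u then Alive else st v)"

inductive reachable :: "'a set \<Rightarrow> 'a \<Rightarrow> ('a \<Rightarrow> 'a) \<Rightarrow> ('a \<Rightarrow> status) \<Rightarrow> bool"
  for V r p where
  init: "reachable V r p (init_state r)"
| step: "reachable V r p st \<Longrightarrow> \<not> game_ended V st \<Longrightarrow> u \<in> V \<Longrightarrow> st u = Alive \<Longrightarrow>
         reachable V r p (kill V r p st u)"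

definition rank :: "'a set \<Rightarrow> 'a \<Rightarrow> ('a \<Rightarrow> 'a) \<Rightarrow> ('a \<Rightarrow> status) \<Rightarrow> 'a \<Rightarrow> nat" where
  "rank V r p st u = card {w \<in> subtree V p u. is_leaf V r p w \<and> st w \<noteq> Dead}"

definition eta :: "'a set \<Rightarrow> 'a \<Rightarrow> ('a \<Rightarrow> 'a) \<Rightarrow> ('a \<Rightarrow> status) \<Rightarrow> 'a \<Rightarrow> real" where
  "eta V r p st u = (if st u = Alive then real (rank V r p st u) / real (rank V r p st r) else 0)"

definition Phi :: "'a set \<Rightarrow> 'a \<Rightarrow> ('a \<Rightarrow> 'a) \<Rightarrow> ('a \<Rightarrow> status) \<Rightarrow> real" where
  "Phi V r p st = 4 * real (level V r p r) * harm (rank V r p st r)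
     + (\<Sum>w\<in>V. eta V r p st w * real (level V r p w))"

definition herc_cost :: "'a set \<Rightarrow> 'a \<Rightarrow> ('a \<Rightarrow> 'a) \<Rightarrow> ('a \<Rightarrow> status) \<Rightarrow> ('a \<Rightarrow> status) \<Rightarrow> 'a \<Rightarrow> real" where
  "herc_cost V r p st st' u =
     (\<Sum>w\<in>V - {u}. (eta V r p st' w - eta V r p st w) * real (tdist V r p u w))"

end

theory Submission
  imports Defs
begin

locale rtree = fixes V :: "'a set" and r :: 'a and p :: "'a \<Rightarrow> 'a"
  assumes rt: "rooted_tree V r p"
begin

lemma fin: "finite V" and rV: "r \<in> V" and pr: "p r = r" and pV: "v \<in> V \<Longrightarrow> p v \<in> V"
  and reach: "v \<in> V \<Longrightarrow> \<exists>n. (p^^n) v = r"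
  using rt unfolding rooted_tree_def by auto

lemma iterV: "x \<in> V \<Longrightarrow> (p^^n) x \<in> V" by (induction n) (auto simp: pV)
lemma iter_r: "(p^^n) r = r" by (induction n) (auto simp: pr)

lemma pS: "(p^^k) (p y) = (p^^Suc k) y" by (simp only: funpow_Suc_right o_apply)

lemma funpow_split: "(p^^(j+m)) x = (p^^j) ((p^^m) x)" by (simp add: funpow_add)

lemma cycle: assumes "v\<in>V" "n>0" "(p^^n) v = v" shows "v = r"
proof -
  obtain m where m: "(p^^m) v = r" using reach assms(1) by blast
  have k: "(p^^(n*k)) v = v" for k
  proof (induction k)
    case 0 then show ?case by simp
  next
    case (Suc k)
    have "(p^^(n*Suc k)) v = (p^^n) ((p^^(n*k)) v)" by (simp add: funpow_add)
    then show ?case using Suc assms(3) by simp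
  qed
  have "n*m \<ge> m" using assms(2) by simp
  then obtain j where j: "n*m = j + m" by (metis le_add_diff_inverse2)
  have "(p^^(n*m)) v = v" by (rule k)
  then have "v = (p^^(j+m)) v" using j by simp
  also have "\<dots> = r" using m iter_r by (simp add: funpow_split)
  finally show ?thesis .
qed

definition dep where "dep x = (LEAST m. (p^^m) x = r)"

lemma dep: assumes "x\<in>V" shows "(p^^(dep x)) x = r" unfolding dep_def using reach[OF assms] by (rule LeastI_ex)
lemma dep_min: "i < dep x \<Longrightarrow> (p^^i) x \<noteq> r" unfolding dep_def using not_less_Least by blast
lemma dep_le: "(p^^n) x = r \<Longrightarrow> dep x \<le> n" unfolding dep_def by (rule Least_le)
lemma dep_r: "dep r = 0" using dep_le[of 0 r] by simp

lemma dep_edge: assumes "y\<in>V" "y\<noteq>r" shows "dep y = Suc (dep (p y))"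
proof -
  have a: "(p^^(dep y)) y = r" using dep[OF assms(1)] .
  have "dep y \<noteq> 0"
  proof
    assume "dep y = 0" then show False using a assms(2) by simp
  qed
  then obtain k where k: "dep y = Suc k" by (cases "dep y") auto
  have "(p^^k) (p y) = r" using a k by (simp add: pS)
  hence "dep (p y) \<le> k" by (rule dep_le)
  moreover have "(p^^(Suc (dep (p y)))) y = r" using dep[OF pV[OF assms(1)]]
    by (simp add: pS)
  hence "dep y \<le> Suc (dep (p y))" by (rule dep_le)
  ultimately show ?thesis using k by simp
qed

lemma adj_dep: assumes "adj V r p x y" shows "dep x = Suc (dep y) \<or> dep y = Suc (dep x)"
proof -
  have h: "x \<in> V" "y \<in> V" "(x \<noteq> r \<and> p x = y) \<or> (y \<noteq> r \<and> p y = x)" using assms unfolding adj_def by auto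
  from h(3) show ?thesis
  proof
    assume a: "x \<noteq> r \<and> p x = y"
    have "dep x = Suc (dep (p x))" using dep_edge[OF h(1) conjunct1[OF a]] .
    then show ?thesis using a by simp
  next
    assume a: "y \<noteq> r \<and> p y = x"
    have "dep y = Suc (dep (p y))" using dep_edge[OF h(2) conjunct1[OF a]] .
    then show ?thesis using a by simp
  qed
qed

lemma path_dep: "\<forall>i<n. adj V r p (f i) (f (Suc i)) \<Longrightarrow> dep (f n) \<le> dep (f 0) + n \<and> dep (f 0) \<le> dep (f n) + n"
proof (induction n)
  case 0 show ?case by simp
next
  case (Suc n)
  then have IH: "dep (f n) \<le> dep (f 0) + n \<and> dep (f 0) \<le> dep (f n) + n" by simp
  have "adj V r p (f n) (f (Suc n))" using Suc.prems by simp
  from adj_dep[OF this] IH show ?case by auto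
qed

lemma mk_path: "f 0 = a \<Longrightarrow> f n = b \<Longrightarrow> \<forall>i<n. adj V r p (f i) (f (Suc i)) \<Longrightarrow>
   \<exists>xs. length xs = Suc n \<and> hd xs = a \<and> last xs = b \<and> (\<forall>i<n. adj V r p (xs ! i) (xs ! Suc i))"
  apply (rule exI[of _ "map f [0..<Suc n]"])
  by (simp add: hd_conv_nth last_conv_nth del: upt_Suc)

lemma tdist_le: "f 0 = a \<Longrightarrow> f n = b \<Longrightarrow> \<forall>i<n. adj V r p (f i) (f (Suc i)) \<Longrightarrow> tdist V r p a b \<le> n"
  unfolding tdist_def by (rule Least_le) (rule mk_path)

lemma root_path: assumes "a\<in>V" "b\<in>V"
  shows "\<exists>f. f 0 = a \<and> f (dep a + dep b) = b \<and> (\<forall>i<dep a + dep b. adj V r p (f i) (f (Suc i)))"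
proof -
  let ?da = "dep a"
  let ?db = "dep b"
  define f where "f = (\<lambda>i. if i \<le> ?da then (p^^i) a else (p^^(?da + ?db - i)) b)"
  have ha: "(p^^?da) a = r" using dep[OF assms(1)] .
  have hb: "(p^^?db) b = r" using dep[OF assms(2)] .
  have H2: "f (?da + ?db) = b"
  proof (cases "?db = 0")
    case True then show ?thesis using ha hb by (simp add: f_def)
  next
    case False then show ?thesis by (simp add: f_def)
  qed
  have AD: "adj V r p (f i) (f (Suc i))" if i: "i < ?da + ?db" for i
  proof (cases "i < ?da")
    case True
    have "(p^^i) a \<noteq> r" using dep_min True by blast
    moreover have "(p^^i) a \<in> V" using iterV assms by blast
    moreover have "f i = (p^^i) a" "f (Suc i) = p ((p^^i) a)" using True by (simp_all add: f_def)
    ultimately show ?thesis using pV unfolding adj_def by auto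
  next
    case False
    define k where "k = ?da + ?db - Suc i"
    have k1: "k < ?db" using i False k_def by simp
    have y: "(p^^k) b \<noteq> r" using dep_min k1 by blast
    have yV: "(p^^k) b \<in> V" using iterV assms by blast
    have fs: "f (Suc i) = (p^^k) b" using False k_def by (simp add: f_def)
    have pk: "p ((p^^k) b) = f i"
    proof (cases "i = ?da")
      case True
      then have "Suc k = ?db" using k_def i by simp
      then have "(p^^(Suc k)) b = r" using hb by (simp only:)
      then have "p ((p^^k) b) = r" by simp
      then show ?thesis using True ha by (simp add: f_def)
    next
      case F2: False
      then have "?da + ?db - i = Suc k" using k_def i False by simp
      then show ?thesis using False F2 by (simp add: f_def)
    qed
    have fiV: "f i \<in> V" using pV[OF yV] pk by simp
    have "f (Suc i) \<noteq> r \<and> p (f (Suc i)) = f i" using fs y pk by simp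
    moreover have "f (Suc i) \<in> V" using fs yV by simp
    ultimately show ?thesis using fiV unfolding adj_def by blast
  qed
  have H1: "f 0 = a" by (simp add: f_def)
  have H3: "\<forall>i<?da + ?db. adj V r p (f i) (f (Suc i))" using AD by blast
  show ?thesis by (rule exI[of _ f]) (intro conjI H1 H2 H3)
qed

lemma tdist_root: assumes "a\<in>V" "b\<in>V" shows "tdist V r p a b \<le> dep a + dep b"
proof -
  obtain f where "f 0 = a" "f (dep a + dep b) = b" "\<forall>i<dep a + dep b. adj V r p (f i) (f (Suc i))"
    using root_path[OF assms] by blast
  then show ?thesis by (rule tdist_le)
qed

lemma tdist_ge: assumes "a\<in>V" "b\<in>V" shows "dep b \<le> dep a + tdist V r p a b"
proof -
  let ?P = "\<lambda>n. \<exists>xs. length xs = Suc n \<and> hd xs = a \<and> last xs = b \<and> (\<forall>i < n. adj V r p (xs ! i) (xs ! Suc i))"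
  obtain f where "f 0 = a" "f (dep a + dep b) = b" "\<forall>i<dep a + dep b. adj V r p (f i) (f (Suc i))"
    using root_path[OF assms] by blast
  then have "?P (dep a + dep b)" by (rule mk_path)
  then have "\<exists>n. ?P n" by blast
  then have "?P (tdist V r p a b)" unfolding tdist_def by (rule LeastI_ex)
  then obtain xs where xs: "length xs = Suc (tdist V r p a b)" "hd xs = a" "last xs = b"
     "\<forall>i < tdist V r p a b. adj V r p (xs ! i) (xs ! Suc i)" by blast
  have "xs ! 0 = a" using xs by (metis hd_conv_nth list.size(3) nat.distinct(1))
  moreover have "xs ! tdist V r p a b = b" using xs by (metis last_conv_nth list.size(3) nat.distinct(1) diff_Suc_1)
  ultimately show ?thesis using path_dep[OF xs(4)] by simp
qed


abbreviation "sub a \<equiv> subtree V p a"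
abbreviation "ch u \<equiv> children V r p u"

lemma sub_iff: "x \<in> sub a \<longleftrightarrow> x \<in> V \<and> (\<exists>n. (p^^n) x = a)" by (simp add: subtree_def)
lemma sub_V: "x \<in> sub a \<Longrightarrow> x \<in> V" by (simp add: subtree_def)
lemma sub_ancV: "x \<in> sub a \<Longrightarrow> a \<in> V" unfolding subtree_def using iterV by blast
lemma self_sub: "a \<in> V \<Longrightarrow> a \<in> sub a" unfolding subtree_def by (auto intro: exI[of _ 0])
lemma sub_r: "sub r = V" unfolding subtree_def using reach by auto
lemma sub_E: "x \<in> sub a \<Longrightarrow> \<exists>n. (p^^n) x = a" by (simp add: subtree_def)
lemma sub_intro: "x \<in> V \<Longrightarrow> (p^^n) x = a \<Longrightarrow> x \<in> sub a" by (auto simp: subtree_def)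
lemma sub_fin: "finite (sub a)" using fin sub_V by (meson finite_subset subsetI)
lemma sub_trans: assumes "a \<in> sub b" "x \<in> sub a" shows "x \<in> sub b"
proof -
  obtain m where m: "(p^^m) a = b" using assms(1) sub_iff by blast
  obtain n where n: "(p^^n) x = a" using assms(2) sub_iff by blast
  have "(p^^(m+n)) x = b" using m n by (simp add: funpow_split)
  then show ?thesis using assms(2) sub_iff by blast
qed
lemma parent_sub: assumes "x \<in> sub v" "x \<noteq> v" shows "p x \<in> sub v"
proof -
  obtain n where n: "(p^^n) x = v" using assms(1) sub_iff by blast
  have "n \<noteq> 0" using n assms(2) by (metis funpow_0)
  then obtain k where k: "n = Suc k" by (cases n) auto
  have "(p^^k) (p x) = v" using n k by (simp add: pS)
  moreover have "p x \<in> V" using assms(1) sub_V pV by blast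
  ultimately show ?thesis using sub_iff by blast
qed
lemma sub_antisym: assumes "a \<in> sub b" "b \<in> sub a" shows "a = b"
proof -
  obtain m where m: "(p^^m) a = b" using assms(1) sub_iff by blast
  obtain n where n: "(p^^n) b = a" using assms(2) sub_iff by blast
  have c: "(p^^(n+m)) a = a" using m n by (simp add: funpow_split)
  show ?thesis
  proof (cases "n + m = 0")
    case True then show ?thesis using m by simp
  next
    case False
    then have nm: "0 < n + m" by simp
    have aV: "a \<in> V" using assms(1) sub_V by blast
    have "a = r" using aV nm c by (rule cycle)
    then show ?thesis using m iter_r by simp
  qed
qed
lemma sub_comp: assumes "x \<in> sub a" "x \<in> sub b" shows "a \<in> sub b \<or> b \<in> sub a"
proof -
  obtain i where i: "(p^^i) x = a" using assms(1) sub_iff by blast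
  obtain j where j: "(p^^j) x = b" using assms(2) sub_iff by blast
  have aV: "a \<in> V" "b \<in> V" using assms sub_ancV by blast+
  show ?thesis
  proof (cases "i \<le> j")
    case True
    then obtain k where "j = k + i" by (metis le_add_diff_inverse2)
    then have "(p^^k) a = b" using i j by (simp add: funpow_split)
    then show ?thesis using sub_intro[OF aV(1)] by blast
  next
    case False
    then obtain k where "i = k + j" by (metis le_add_diff_inverse2 nat_le_linear)
    then have "(p^^k) b = a" using i j by (simp add: funpow_split)
    then show ?thesis using sub_intro[OF aV(2)] by blast
  qed
qed

lemma child: "c \<in> ch u \<Longrightarrow> c \<in> V \<and> c \<noteq> r \<and> p c = u" by (simp add: children_def)
lemma child_uV: "c \<in> ch u \<Longrightarrow> u \<in> V" using child pV by metis
lemma child_sub: assumes "c \<in> ch u" shows "c \<in> sub u"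
proof -
  have "(p^^1) c = u" using child assms by simp
  then show ?thesis using child assms sub_iff by blast
qed
lemma child_ne: assumes "c \<in> ch u" shows "c \<noteq> u"
proof
  assume "c = u"
  then have "(p^^1) c = c" using child assms by simp
  moreover have "c \<in> V" using child assms by blast
  ultimately have "c = r" using cycle[of c 1] by simp
  then show False using child assms by blast
qed
lemma child_subset: "c \<in> ch u \<Longrightarrow> sub c \<subseteq> sub u" using child_sub sub_trans by blast
lemma child_disj: assumes "c1 \<in> ch u" "c2 \<in> ch u" "c1 \<noteq> c2" shows "sub c1 \<inter> sub c2 = {}"
proof (rule ccontr)
  assume "sub c1 \<inter> sub c2 \<noteq> {}"
  then obtain x where "x \<in> sub c1" "x \<in> sub c2" by blast
  then have "c1 \<in> sub c2 \<or> c2 \<in> sub c1" using sub_comp by blast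
  then show False
  proof
    assume h: "c1 \<in> sub c2"
    have "p c1 \<in> sub c2" using parent_sub[OF h] assms(3) by blast
    then have "u \<in> sub c2" using child assms(1) by metis
    then have "u = c2" using child_sub[OF assms(2)] by (rule sub_antisym)
    then show False using child_ne assms(2) by blast
  next
    assume h: "c2 \<in> sub c1"
    have "p c2 \<in> sub c1" using parent_sub[OF h] assms(3) by metis
    then have "u \<in> sub c1" using child assms(2) by metis
    then have "u = c1" using child_sub[OF assms(1)] by (rule sub_antisym)
    then show False using child_ne assms(1) by blast
  qed
qed

lemma strict_child: assumes "x \<in> sub u" "x \<noteq> u" shows "\<exists>c \<in> ch u. x \<in> sub c"
proof -
  define n where "n = (LEAST n. (p^^n) x = u)"
  have ex: "\<exists>n. (p^^n) x = u" using assms(1) sub_iff by blast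
  have hn: "(p^^n) x = u" unfolding n_def using ex by (rule LeastI_ex)
  have mn: "m < n \<Longrightarrow> (p^^m) x \<noteq> u" for m unfolding n_def using not_less_Least by blast
  have "n \<noteq> 0" using hn assms(2) by (metis funpow_0)
  then obtain k where k: "n = Suc k" by (cases n) auto
  define c where "c = (p^^k) x"
  have pc: "p c = u" using hn k c_def by simp
  have cV: "c \<in> V" using iterV assms(1) sub_V c_def by blast
  have cr: "c \<noteq> r"
  proof
    assume "c = r"
    then have "u = r" using pc pr by simp
    then have "(p^^k) x = u" using \<open>c = r\<close> c_def by simp
    then show False using mn k by simp
  qed
  have "c \<in> ch u" using pc cV cr by (simp add: children_def)
  moreover have "x \<in> sub c" using c_def assms(1) sub_iff by blast
  ultimately show ?thesis by blast
qed

lemma leaf_ex: assumes "u \<in> V" shows "\<exists>x \<in> sub u. is_leaf V r p x"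
proof -
  have f: "finite (dep ` sub u)" using sub_fin by simp
  have ne: "dep ` sub u \<noteq> {}" using self_sub assms by blast
  obtain x where x: "x \<in> sub u" "dep x = Max (dep ` sub u)" using Max_in[OF f ne] by auto
  have mx: "y \<in> sub u \<Longrightarrow> dep y \<le> dep x" for y using x(2) Max_ge[OF f] by simp
  have "ch x = {}"
  proof (rule ccontr)
    assume "ch x \<noteq> {}"
    then obtain c where c: "c \<in> ch x" by blast
    have "c \<in> sub u" using child_sub[OF c] x(1) sub_trans by blast
    moreover have "dep c = Suc (dep x)" using dep_edge child c by metis
    ultimately show False using mx by fastforce
  qed
  then show ?thesis using x(1) sub_V unfolding is_leaf_def by blast
qed

lemma level_ge: "x \<in> sub u \<Longrightarrow> tdist V r p u x \<le> level V r p u"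
  unfolding level_def by (rule Max_ge) (auto simp: sub_fin)
lemma level_at: assumes "u \<in> V" shows "\<exists>x\<in>sub u. level V r p u = tdist V r p u x"
proof -
  have f: "finite (tdist V r p u ` sub u)" using sub_fin by simp
  have ne: "tdist V r p u ` sub u \<noteq> {}" using self_sub assms by blast
  show ?thesis using Max_in[OF f ne] unfolding level_def by auto
qed

lemma chain_up: assumes "x \<in> sub a" shows "\<exists>n. dep x = n + dep a \<and> tdist V r p a x \<le> n"
proof -
  have xV: "x \<in> V" using assms sub_V by blast
  define n where "n = (LEAST n. (p^^n) x = a)"
  have ex: "\<exists>n. (p^^n) x = a" using assms sub_iff by blast
  have hn: "(p^^n) x = a" unfolding n_def using ex by (rule LeastI_ex)
  have mn: "m < n \<Longrightarrow> (p^^m) x \<noteq> a" for m unfolding n_def using not_less_Least by blast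
  have nr: "(p^^i) x \<noteq> r" if i: "i < n" for i
  proof
    assume h: "(p^^i) x = r"
    obtain j where j: "n = j + i" using i by (metis le_add_diff_inverse2 less_imp_le)
    have "(p^^n) x = r" using h j iter_r by (simp add: funpow_split)
    then have "a = r" using hn by simp
    then show False using mn i h by simp
  qed
  have di: "i \<le> n \<Longrightarrow> dep x = i + dep ((p^^i) x)" for i
  proof (induction i)
    case 0 then show ?case by simp
  next
    case (Suc i)
    have y: "(p^^i) x \<in> V" "(p^^i) x \<noteq> r" using iterV xV nr Suc.prems by auto
    have "dep ((p^^i) x) = Suc (dep ((p^^Suc i) x))" using dep_edge[OF y] by simp
    then show ?case using Suc by simp
  qed
  have "tdist V r p a x \<le> n"
  proof (rule tdist_le[where f = "\<lambda>j. (p^^(n-j)) x"])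
    show "(p^^(n-0)) x = a" using hn by simp
    show "(p^^(n-n)) x = x" by simp
    show "\<forall>j<n. adj V r p ((p^^(n-j)) x) ((p^^(n - Suc j)) x)"
    proof (intro allI impI)
      fix j assume j: "j < n"
      define y where "y = (p^^(n - Suc j)) x"
      have y1: "y \<noteq> r" using nr j y_def by simp
      have y2: "y \<in> V" using iterV xV y_def by blast
      have "n - j = Suc (n - Suc j)" using j by simp
      then have y3: "(p^^(n-j)) x = p y" using y_def by simp
      show "adj V r p ((p^^(n-j)) x) ((p^^(n - Suc j)) x)"
        using y1 y2 y3 pV unfolding adj_def y_def[symmetric] by auto
    qed
  qed
  then show ?thesis using di[of n] hn by auto
qed

lemma level_child: assumes "c \<in> ch u" shows "Suc (level V r p c) \<le> level V r p u"
proof -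
  have cV: "c \<in> V" and uV: "u \<in> V" using child child_uV assms by blast+
  obtain x where x: "x \<in> sub c" "level V r p c = tdist V r p c x" using level_at cV by blast
  obtain n where n: "dep x = n + dep c" "tdist V r p c x \<le> n" using chain_up x(1) by blast
  have dc: "dep c = Suc (dep u)" using dep_edge child assms by metis
  have xu: "x \<in> sub u" using x(1) child_subset assms by blast
  have "dep x \<le> dep u + tdist V r p u x" using tdist_ge uV sub_V xu by blast
  moreover have "tdist V r p u x \<le> level V r p u" using level_ge xu by blast
  ultimately show ?thesis using n dc x(2) by linarith
qed

lemma level_le_h: assumes "w \<in> V" shows "level V r p w \<le> level V r p r"
proof -
  obtain x where x: "x \<in> sub w" "level V r p w = tdist V r p w x" using level_at assms by blast
  obtain n where n: "dep x = n + dep w" "tdist V r p w x \<le> n" using chain_up x(1) by blast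
  have xV: "x \<in> V" using x sub_V by blast
  have "dep x \<le> dep r + tdist V r p r x" using tdist_ge rV xV by blast
  moreover have "tdist V r p r x \<le> level V r p r" using level_ge xV sub_r by blast
  ultimately show ?thesis using n x(2) dep_r by linarith
qed

lemma dep_le_h: assumes "x \<in> V" shows "dep x \<le> level V r p r"
proof -
  have "dep x \<le> dep r + tdist V r p r x" using tdist_ge rV assms by blast
  moreover have "tdist V r p r x \<le> level V r p r" using level_ge assms sub_r by blast
  ultimately show ?thesis using dep_r by linarith
qed

lemma tdist_2h: assumes "a \<in> V" "b \<in> V" shows "tdist V r p a b \<le> 2 * level V r p r"
proof -
  have "tdist V r p a b \<le> dep a + dep b" using tdist_root assms by blast
  moreover have "dep a \<le> level V r p r" "dep b \<le> level V r p r" using dep_le_h assms by blast+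
  ultimately show ?thesis by linarith
qed

lemma tdist_child: assumes "c \<in> ch u" shows "tdist V r p u c \<le> 1"
proof (rule tdist_le[where f = "\<lambda>i. if i = 0 then u else c"])
  show "\<forall>i<1. adj V r p (if i = 0 then u else c) (if Suc i = 0 then u else c)"
    using child assms child_uV unfolding adj_def by auto
qed auto




definition ginv :: "('a \<Rightarrow> status) \<Rightarrow> bool" where
  "ginv s \<longleftrightarrow> (\<forall>v\<in>V. \<forall>w. s v = Alive \<longrightarrow> w \<in> sub v \<longrightarrow> w \<noteq> v \<longrightarrow> s w = Asleep) \<and>
           (\<forall>v\<in>V. \<forall>a. s v = Alive \<longrightarrow> v \<in> sub a \<longrightarrow> a \<noteq> v \<longrightarrow> s a = Dead) \<and>
           (\<forall>w\<in>V. s w = Asleep \<longrightarrow> (\<exists>a. w \<in> sub a \<and> s a = Alive))"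

lemma I1: "ginv s \<Longrightarrow> v \<in> V \<Longrightarrow> s v = Alive \<Longrightarrow> w \<in> sub v \<Longrightarrow> w \<noteq> v \<Longrightarrow> s w = Asleep"
  unfolding ginv_def by blast
lemma I2: "ginv s \<Longrightarrow> v \<in> V \<Longrightarrow> s v = Alive \<Longrightarrow> v \<in> sub a \<Longrightarrow> a \<noteq> v \<Longrightarrow> s a = Dead"
  unfolding ginv_def by blast
lemma I3: "ginv s \<Longrightarrow> w \<in> V \<Longrightarrow> s w = Asleep \<Longrightarrow> \<exists>a. w \<in> sub a \<and> s a = Alive"
  unfolding ginv_def by blast

lemma ginv_init: "ginv (init_state r)"
proof -
  have ar: "a = r" if ra: "r \<in> sub a" for a
  proof -
    obtain n where "(p^^n) r = a" using sub_E[OF ra] by blast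
    then show ?thesis using iter_r by simp
  qed
  show ?thesis unfolding ginv_def
  proof (intro conjI ballI allI impI)
    fix v w assume h: "v \<in> V" "init_state r v = Alive" "w \<in> sub v" "w \<noteq> v"
    then have "v = r" by (simp add: init_state_def split: if_splits)
    then have "w \<noteq> r" using h(4) by simp
    then show "init_state r w = Asleep" by (simp add: init_state_def)
  next
    fix v a assume h: "v \<in> V" "init_state r v = Alive" "v \<in> sub a" "a \<noteq> v"
    then have "v = r" by (simp add: init_state_def split: if_splits)
    then have "a = r" using ar h(3) by simp
    then show "init_state r a = Dead" using h(4) \<open>v = r\<close> by simp
  next
    fix w assume h: "w \<in> V" "init_state r w = Asleep"
    have "w \<in> sub r" using h(1) sub_r by simp
    moreover have "init_state r r = Alive" by (simp add: init_state_def)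
    ultimately show "\<exists>a. w \<in> sub a \<and> init_state r a = Alive" by blast
  qed
qed

lemma ginv_step:
  assumes gi: "ginv s" and uV: "u \<in> V" and ua: "s u = Alive"
  shows "ginv (kill V r p s u)"
proof -
  define s' where "s' = kill V r p s u"
  have ks: "s' x = (if x = u then Dead else if x \<in> ch u then Alive else s x)" for x
    by (simp add: s'_def kill_def)
  have chA: "s c = Asleep" if "c \<in> ch u" for c
    using I1[OF gi uV ua child_sub[OF that] child_ne[OF that]] .
  have chu: "u \<notin> ch u" using child_ne by blast
  have alive': "s' x = Alive \<longleftrightarrow> x \<in> ch u \<or> (x \<noteq> u \<and> s x = Alive)" for x
    using ks chA chu by (cases "x = u") auto
  have asleep': "s' x = Asleep \<longleftrightarrow> x \<noteq> u \<and> x \<notin> ch u \<and> s x = Asleep" for x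
    using ks by auto
  have dead': "s' x = Dead \<longleftrightarrow> x = u \<or> (x \<notin> ch u \<and> s x = Dead)" for x
    using ks by auto
  have J1: "s' w = Asleep" if v: "v \<in> V" "s' v = Alive" "w \<in> sub v" "w \<noteq> v" for v w
  proof (cases "v \<in> ch u")
    case True
    have wu: "w \<noteq> u"
    proof
      assume "w = u"
      then have "u = v" using v(3) child_sub[OF True] by (metis sub_antisym)
      then show False using child_ne[OF True] by simp
    qed
    have wc: "w \<notin> ch u"
    proof
      assume wc: "w \<in> ch u"
      have "w \<in> sub w" using self_sub sub_V v(3) by blast
      then have "w \<in> sub v \<inter> sub w" using v(3) by blast
      then show False using child_disj[OF True wc] v(4) by blast
    qed
    have "w \<in> sub u" using sub_trans[OF child_sub[OF True] v(3)] .
    then have "s w = Asleep" using I1[OF gi uV ua] wu by blast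
    then show ?thesis using asleep' wu wc by blast
  next
    case False
    then have vu: "v \<noteq> u" and sv: "s v = Alive" using v(2) alive' by blast+
    have wu: "w \<noteq> u"
    proof
      assume "w = u"
      then have "s u = Asleep" using I1[OF gi v(1) sv v(3)] v(4) by blast
      then show False using ua by simp
    qed
    have wc: "w \<notin> ch u"
    proof
      assume wc: "w \<in> ch u"
      have "p w \<in> sub v" using parent_sub[OF v(3) v(4)] .
      then have "u \<in> sub v" using child[OF wc] by simp
      then have "s u = Asleep" using I1[OF gi v(1) sv] vu by blast
      then show False using ua by simp
    qed
    have "s w = Asleep" using I1[OF gi v(1) sv v(3) v(4)] .
    then show ?thesis using asleep' wu wc by blast
  qed
  have J2: "s' a = Dead" if v: "v \<in> V" "s' v = Alive" "v \<in> sub a" "a \<noteq> v" for v a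
  proof (cases "v \<in> ch u")
    case True
    show ?thesis
    proof (cases "a = u")
      case True then show ?thesis using dead' by blast
    next
      case False
      have "p v \<in> sub a" using parent_sub[OF v(3)] v(4) by metis
      then have ua2: "u \<in> sub a" using child[OF True] by simp
      then have "s a = Dead" using I2[OF gi uV ua ua2] False by blast
      moreover have "a \<notin> ch u" using chA calculation by fastforce
      ultimately show ?thesis using dead' by blast
    qed
  next
    case False
    then have vu: "v \<noteq> u" and sv: "s v = Alive" using v(2) alive' by blast+
    have "s a = Dead" using I2[OF gi v(1) sv v(3) v(4)] .
    moreover have "a \<notin> ch u" using chA calculation by fastforce
    ultimately show ?thesis using dead' by blast
  qed
  have J3: "\<exists>a. w \<in> sub a \<and> s' a = Alive" if w: "w \<in> V" "s' w = Asleep" for w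
  proof -
    have wu: "w \<noteq> u" and sw: "s w = Asleep" using w(2) asleep' by blast+
    obtain a where a: "w \<in> sub a" "s a = Alive" using I3[OF gi w(1) sw] by blast
    show ?thesis
    proof (cases "a = u")
      case True
      then obtain c where c: "c \<in> ch u" "w \<in> sub c" using strict_child a(1) wu by blast
      then have "s' c = Alive" using alive' by blast
      then show ?thesis using c(2) by blast
    next
      case False
      then have "s' a = Alive" using alive' a(2) by blast
      then show ?thesis using a(1) by blast
    qed
  qed
  show ?thesis unfolding s'_def[symmetric] ginv_def using J1 J2 J3 by blast
qed

lemma ginv_reach: "reachable V r p s \<Longrightarrow> ginv s"
proof (induction rule: reachable.induct)
  case init then show ?case by (rule ginv_init)
next
  case (step st u) then show ?case using ginv_step by blast
qed

abbreviation "LL s a \<equiv> {w \<in> sub a. is_leaf V r p w \<and> s w \<noteq> Dead}"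

lemma LL_fin: "finite (LL s a)" using sub_fin by simp

lemma rank_pos: assumes "ginv s" "a \<in> V" "s a = Alive" shows "1 \<le> rank V r p s a"
proof -
  obtain x where x: "x \<in> sub a" "is_leaf V r p x" using leaf_ex assms(2) by blast
  have "s x \<noteq> Dead"
  proof (cases "x = a")
    case True then show ?thesis using assms by simp
  next
    case False then show ?thesis using I1[OF assms x(1)] by simp
  qed
  then have "x \<in> LL s a" using x by blast
  then have "LL s a \<noteq> {}" by blast
  then show ?thesis unfolding rank_def using LL_fin
    by (metis One_nat_def Suc_leI card_gt_0_iff)
qed




lemma main:
  assumes reach: "reachable V r p st" and ne: "\<not> game_ended V st" and uV: "u \<in> V" and ua: "st u = Alive"
  shows "Phi V r p (kill V r p st u) - Phi V r p st \<le> - herc_cost V r p st (kill V r p st u) u"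
proof -
  define s' where "s' = kill V r p st u"
  have gi: "ginv st" using ginv_reach[OF reach] .
  define R where "R = rank V r p st r"
  define R' where "R' = rank V r p s' r"
  define h where "h = level V r p r"
  define E where "E w = eta V r p s' w - eta V r p st w" for w
  define X where "X w = real (level V r p w) + real (tdist V r p u w)" for w
  define G where "G = 4 * real h * (harm R' - harm R) + E u * real (level V r p u) + (\<Sum>w\<in>V-{u}. E w * X w)"
  have key: "Phi V r p s' - Phi V r p st + herc_cost V r p st s' u = G"
  proof -
    have A0: "(\<Sum>w\<in>V. eta V r p s' w * real (level V r p w)) - (\<Sum>w\<in>V. eta V r p st w * real (level V r p w))
        = (\<Sum>w\<in>V. E w * real (level V r p w))"
      by (simp add: E_def sum_subtractf[symmetric] left_diff_distrib)
    have A1: "(\<Sum>w\<in>V. E w * real (level V r p w)) = E u * real (level V r p u) + (\<Sum>w\<in>V-{u}. E w * real (level V r p w))"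
      by (rule sum.remove[OF fin uV])
    have B: "herc_cost V r p st s' u = (\<Sum>w\<in>V-{u}. E w * real (tdist V r p u w))"
      by (simp add: herc_cost_def E_def)
    have C: "(\<Sum>w\<in>V-{u}. E w * X w) = (\<Sum>w\<in>V-{u}. E w * real (level V r p w)) + (\<Sum>w\<in>V-{u}. E w * real (tdist V r p u w))"
      by (simp add: X_def distrib_left sum.distrib)
    have D: "4 * real h * (harm R' - harm R) = 4 * real h * harm R' - 4 * real h * harm R"
      by (simp add: algebra_simps)
    show ?thesis unfolding Phi_def G_def R_def[symmetric] R'_def[symmetric] h_def[symmetric]
      using A0 A1 B C D by linarith
  qed
  have "G \<le> 0"
  proof (cases "ch u = {}")
    case False
    have notleaf: "\<not> is_leaf V r p u" using False by (simp add: is_leaf_def)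
    have ks: "s' x = (if x = u then Dead else if x \<in> ch u then Alive else st x)" for x
      by (simp add: s'_def kill_def)
    have chA: "st c = Asleep" if "c \<in> ch u" for c
      using I1[OF gi uV ua child_sub[OF that] child_ne[OF that]] .
    have leafeq: "(s' x \<noteq> Dead) = (st x \<noteq> Dead)" if lx: "is_leaf V r p x" for x
    proof -
      have "x \<noteq> u" using lx notleaf by blast
      then show ?thesis using ks chA by (cases "x \<in> ch u") auto
    qed
    have rk: "rank V r p s' w = rank V r p st w" for w
      unfolding rank_def by (intro arg_cong[where f = card] Collect_cong) (use leafeq in blast)
    have RR: "R' = R" unfolding R_def R'_def by (rule rk)
    have Eu: "E u = - (real (rank V r p st u) / real R)"
      by (simp add: E_def eta_def ks ua R_def)
    have Ew: "E w = (if w \<in> ch u then real (rank V r p st w) / real R else 0)" if w: "w \<in> V - {u}" for w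
    proof (cases "w \<in> ch u")
      case True
      then show ?thesis using w chA[OF True] by (simp add: E_def eta_def ks rk R_def)
    next
      case F: False
      then show ?thesis using w by (simp add: E_def eta_def ks rk R_def)
    qed
    have chV: "{w \<in> V - {u}. w \<in> ch u} = ch u" by (auto dest: child child_ne)
    have S1: "(\<Sum>w\<in>V-{u}. E w * X w) = (\<Sum>w\<in>ch u. real (rank V r p st w) / real R * X w)"
    proof -
      have "(\<Sum>w\<in>V-{u}. E w * X w) = (\<Sum>w\<in>V-{u}. if w \<in> ch u then real (rank V r p st w) / real R * X w else 0)"
        by (rule sum.cong) (auto simp: Ew)
      also have "\<dots> = (\<Sum>w\<in>{w \<in> V - {u}. w \<in> ch u}. real (rank V r p st w) / real R * X w)"
        by (rule sum.inter_filter[symmetric]) (simp add: fin)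
      finally show ?thesis unfolding chV .
    qed
    have S2: "(\<Sum>w\<in>ch u. real (rank V r p st w) / real R * X w) \<le> (\<Sum>w\<in>ch u. real (rank V r p st w) / real R * real (level V r p u))"
    proof (rule sum_mono)
      fix w assume w: "w \<in> ch u"
      have "Suc (level V r p w) \<le> level V r p u" using level_child[OF w] .
      moreover have "tdist V r p u w \<le> 1" using tdist_child[OF w] .
      ultimately have "level V r p w + tdist V r p u w \<le> level V r p u" by linarith
      then have "X w \<le> real (level V r p u)" unfolding X_def by linarith
      then show "real (rank V r p st w) / real R * X w \<le> real (rank V r p st w) / real R * real (level V r p u)"
        by (intro mult_left_mono) simp_all
    qed
    have finch: "finite (ch u)" using fin by (auto intro: finite_subset dest: child)
    have sumrank: "(\<Sum>w\<in>ch u. rank V r p st w) \<le> rank V r p st u"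
    proof -
      have "(\<Sum>w\<in>ch u. rank V r p st w) = card (\<Union>w\<in>ch u. LL st w)"
        unfolding rank_def
      proof (rule card_UN_disjoint[symmetric])
        show "finite (ch u)" by (rule finch)
        show "\<forall>i\<in>ch u. finite (LL st i)" using LL_fin by blast
        show "\<forall>i\<in>ch u. \<forall>j\<in>ch u. i \<noteq> j \<longrightarrow> LL st i \<inter> LL st j = {}"
        proof (intro ballI impI)
          fix i j assume "i \<in> ch u" "j \<in> ch u" "i \<noteq> j"
          then have "sub i \<inter> sub j = {}" by (rule child_disj)
          then show "LL st i \<inter> LL st j = {}" by blast
        qed
      qed
      also have "\<dots> \<le> card (LL st u)"
      proof (rule card_mono[OF LL_fin])
        show "(\<Union>w\<in>ch u. LL st w) \<subseteq> LL st u" using child_subset by blast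
      qed
      finally show ?thesis unfolding rank_def .
    qed
    have S3: "(\<Sum>w\<in>ch u. real (rank V r p st w) / real R * real (level V r p u))
        = real (\<Sum>w\<in>ch u. rank V r p st w) / real R * real (level V r p u)"
      by (simp add: sum_distrib_right sum_divide_distrib)
    have S4: "real (\<Sum>w\<in>ch u. rank V r p st w) / real R * real (level V r p u)
        \<le> real (rank V r p st u) / real R * real (level V r p u)"
    proof -
      have sr: "real (\<Sum>w\<in>ch u. rank V r p st w) \<le> real (rank V r p st u)" using sumrank by (rule of_nat_mono)
      show ?thesis by (intro mult_right_mono divide_right_mono sr) simp_all
    qed
    have "G = - (real (rank V r p st u) / real R) * real (level V r p u) + (\<Sum>w\<in>V-{u}. E w * X w)"
      unfolding G_def RR Eu by simp
    then show ?thesis using S1 S2 S3 S4 by linarith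
  next
    case True
    have ks: "s' x = (if x = u then Dead else st x)" for x
      by (simp add: s'_def kill_def True)
    define A where "A = {w \<in> V. w \<noteq> u \<and> st w = Alive}"
    have finA: "finite A" using fin A_def by simp
    have uns: "u \<notin> sub w" if w: "w \<in> A" for w
    proof
      assume h: "u \<in> sub w"
      have "st w = Dead" using I2[OF gi uV ua h] w A_def by auto
      then show False using w A_def by auto
    qed
    have rkA: "rank V r p s' w = rank V r p st w" if w: "w \<in> A" for w
    proof -
      have "\<And>x. x \<in> sub w \<Longrightarrow> s' x = st x" using uns[OF w] ks by metis
      then show ?thesis unfolding rank_def by (intro arg_cong[where f = card] Collect_cong) auto
    qed
    have ulf: "is_leaf V r p u" using uV True by (simp add: is_leaf_def)
    have uL: "u \<in> LL st r" using uV sub_r ulf ua by auto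
    have Lr: "LL s' r = LL st r - {u}" using ks by auto
    have RR: "R' = R - 1" unfolding R'_def R_def rank_def Lr using uL LL_fin by (simp add: card_Diff_singleton)
    have ex: "\<exists>v\<in>V. v \<noteq> u \<and> st v \<noteq> Dead"
    proof (rule ccontr)
      assume "\<not> ?thesis"
      then have "{v \<in> V. st v \<noteq> Dead} = {u}" using uV ua by auto
      then show False using ne unfolding game_ended_def by simp
    qed
    then obtain v where v: "v \<in> V" "v \<noteq> u" "st v \<noteq> Dead" by blast
    obtain a where a: "a \<in> A"
    proof (cases "st v")
      case Alive then show ?thesis using that v A_def by blast
    next
      case Asleep
      obtain a where a: "v \<in> sub a" "st a = Alive" using I3[OF gi v(1) Asleep] by blast
      have aV: "a \<in> V" using sub_ancV a(1) by blast
      have "a \<noteq> u"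
      proof
        assume "a = u"
        then obtain c where "c \<in> ch u" using strict_child a(1) v(2) by blast
        then show False using True by simp
      qed
      then show ?thesis using that aV a(2) A_def by blast
    next
      case Dead then show ?thesis using v by simp
    qed
    have aV: "a \<in> V" and aA: "st a = Alive" using a A_def by auto
    have "1 \<le> rank V r p st a" using rank_pos[OF gi aV aA] .
    moreover have "rank V r p s' a \<le> R'"
      unfolding R'_def rank_def
    proof (rule card_mono[OF LL_fin])
      show "LL s' a \<subseteq> LL s' r" using sub_V sub_r by auto
    qed
    ultimately have R'1: "1 \<le> R'" using rkA[OF a] by simp
    have R1: "1 \<le> R" unfolding R_def rank_def using uL LL_fin by (metis One_nat_def Suc_leI card_gt_0_iff empty_iff)
    have RS: "R = Suc R'" using RR R1 R'1 by simp
    have SA: "(\<Sum>w\<in>A. rank V r p st w) \<le> R'"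
    proof -
      have "(\<Sum>w\<in>A. rank V r p st w) = (\<Sum>w\<in>A. rank V r p s' w)" using rkA by simp
      also have "\<dots> = card (\<Union>w\<in>A. LL s' w)"
        unfolding rank_def
      proof (rule card_UN_disjoint[symmetric])
        show "finite A" by (rule finA)
        show "\<forall>i\<in>A. finite (LL s' i)" using LL_fin by blast
        show "\<forall>i\<in>A. \<forall>j\<in>A. i \<noteq> j \<longrightarrow> LL s' i \<inter> LL s' j = {}"
        proof (intro ballI impI)
          fix i j assume ij: "i \<in> A" "j \<in> A" "i \<noteq> j"
          have iV: "i \<in> V" "st i = Alive" "j \<in> V" "st j = Alive" using ij A_def by auto
          show "LL s' i \<inter> LL s' j = {}"
          proof (rule ccontr)
            assume "LL s' i \<inter> LL s' j \<noteq> {}"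
            then obtain x where "x \<in> sub i" "x \<in> sub j" by blast
            then have "i \<in> sub j \<or> j \<in> sub i" by (rule sub_comp)
            then show False
            proof
              assume "i \<in> sub j"
              then have "st j = Dead" using I2[OF gi iV(1) iV(2)] ij(3) by simp
              then show False using iV by simp
            next
              assume "j \<in> sub i"
              then have "st i = Dead" using I2[OF gi iV(3) iV(4)] ij(3) by simp
              then show False using iV by simp
            qed
          qed
        qed
      qed
      also have "\<dots> \<le> card (LL s' r)"
      proof (rule card_mono[OF LL_fin])
        show "(\<Union>w\<in>A. LL s' w) \<subseteq> LL s' r" using sub_V sub_r by auto
      qed
      finally show ?thesis unfolding R'_def rank_def .
    qed
    define q where "q = 1 / real R' - 1 / real R"
    have q0: "0 \<le> q" unfolding q_def using RS R'1 by (simp add: frac_le)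
    have Rpos: "0 < real R'" using R'1 by simp
    have nz: "real R' + real R' * real R' \<noteq> 0" using Rpos by (metis add_pos_pos mult_pos_pos less_irrefl)
    have Rq: "real R' * q = 1 / real R" unfolding q_def using RS Rpos nz by (simp add: field_simps)
    have harmR: "harm R' - harm R = - (1 / real R)" using RS by (simp add: harm_Suc inverse_eq_divide)
    have Ew: "E w = (if w \<in> A then real (rank V r p st w) * q else 0)" if w: "w \<in> V - {u}" for w
    proof (cases "w \<in> A")
      case T: True
      then show ?thesis using w rkA[OF T]
        by (simp add: E_def eta_def ks A_def q_def R_def[symmetric] R'_def[symmetric] right_diff_distrib)
    next
      case F: False
      then show ?thesis using w by (simp add: E_def eta_def ks A_def)
    qed
    have Eu: "E u * real (level V r p u) \<le> 0"
    proof -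
      have "E u \<le> 0" by (simp add: E_def eta_def ks)
      then show ?thesis by (simp add: mult_nonpos_nonneg)
    qed
    have AV: "{w \<in> V - {u}. w \<in> A} = A" unfolding A_def by auto
    have S: "(\<Sum>w\<in>V-{u}. E w * X w) \<le> 3 * real h * (real R' * q)"
    proof -
      have "(\<Sum>w\<in>V-{u}. E w * X w) \<le> (\<Sum>w\<in>V-{u}. if w \<in> A then real (rank V r p st w) * q * (3 * real h) else 0)"
      proof (rule sum_mono)
        fix w assume w: "w \<in> V - {u}"
        show "E w * X w \<le> (if w \<in> A then real (rank V r p st w) * q * (3 * real h) else 0)"
        proof (cases "w \<in> A")
          case T: True
          have "level V r p w \<le> h" unfolding h_def using level_le_h w by blast
          moreover have "tdist V r p u w \<le> 2 * h" unfolding h_def using tdist_2h uV w by blast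
          ultimately have "X w \<le> 3 * real h" unfolding X_def by linarith
          moreover have "0 \<le> real (rank V r p st w) * q" using q0 by simp
          ultimately have "real (rank V r p st w) * q * X w \<le> real (rank V r p st w) * q * (3 * real h)"
            by (intro mult_left_mono) simp_all
          then show ?thesis using Ew[OF w] T by simp
        next
          case F: False
          then show ?thesis using Ew[OF w] by simp
        qed
      qed
      also have "\<dots> = (\<Sum>w\<in>{w \<in> V - {u}. w \<in> A}. real (rank V r p st w) * q * (3 * real h))"
        by (rule sum.inter_filter[symmetric]) (simp add: fin)
      also have "\<dots> = (\<Sum>w\<in>A. real (rank V r p st w)) * (q * (3 * real h))"
        unfolding AV by (simp add: sum_distrib_right mult.assoc)
      also have "\<dots> \<le> real R' * (q * (3 * real h))"
      proof (rule mult_right_mono)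
        show "(\<Sum>w\<in>A. real (rank V r p st w)) \<le> real R'" using SA
          by (metis of_nat_le_iff of_nat_sum)
        show "0 \<le> q * (3 * real h)" using q0 by simp
      qed
      finally show ?thesis by (simp add: algebra_simps)
    qed
    have "G = 4 * real h * (- (1 / real R)) + E u * real (level V r p u) + (\<Sum>w\<in>V-{u}. E w * X w)"
      unfolding G_def harmR ..
    moreover have "3 * real h * (real R' * q) = 3 * real h * (1 / real R)" using Rq by simp
    moreover have "0 \<le> real h * (1 / real R)" by simp
    ultimately show ?thesis using Eu S by linarith
  qed
  then show ?thesis using key unfolding s'_def by linarith
qed


end

theorem lemma3:
  fixes V :: "'a set" and r :: 'a and p :: "'a \<Rightarrow> 'a"
    and st :: "'a \<Rightarrow> status" and u :: 'a
  assumes "rooted_tree V r p"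
    and "reachable V r p st"
    and "\<not> game_ended V st"
    and "u \<in> V" and "st u = Alive"
  shows "Phi V r p (kill V r p st u) - Phi V r p st
           \<le> - herc_cost V r p st (kill V r p st u) u"
proof -
  interpret rtree V r p using assms(1) by (rule rtree.intro)
  show ?thesis using main[OF assms(2) assms(3) assms(4) assms(5)] .
qed

end
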